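(* Let $V:\mathbb{R}^{d_1}\times\mathbb{R}^{d_2}\to\mathbb{R}^n$ be residual-homogeneous, $V(\theta_1,\theta_2)=\Phi\theta_1+g(\theta_2)$, where $\Phi\in\mathbb{R}^{n\times d_1}$ has full rank and $g$ is continuously differentiable and $h$-homogeneous, and suppose there are constants $C,\ell>0$ with $\Vert V(\theta)\Vert_\mu\le C\Vert\theta\Vert^\ell$ for all $\theta=(\theta_1,\theta_2)$. Let $\Pi_\Phi$ be the projection onto the column span of $\Phi$ and let $B_\Phi=\frac{\Vert (I-\gamma P)(V^*-\Pi_\Phi V^* )\Vert_\mu}{1-\gamma}$. Then for any initial condition $\theta(0)=\theta_0$, if $\theta(t)$ follows the dynamics $$\dot\theta=-\nabla V(\theta)^T A\,(V(\theta)-V^* ),$$ we have $\liminf_{t\to\infty}\Vert V(\theta(t))-\Pi_\Phi V^*\Vert_\mu\le B_\Phi$.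
   Context: A Markov reward process has finite state space $\mathcal{S}$ with $|\mathcal{S}|=n$, transition matrix $P$ (entries $P(s'|s)$) defining an irreducible, aperiodic Markov chain with stationary distribution $\mu$, a finite reward function $r(s,s')$, and discount factor $\gamma\in[0,1)$. Let $R(s)=\mathbb{E}_{s'\sim P(\cdot|s)}[r(s,s')]$ and let $V^*\in\mathbb{R}^n$ be the unique solution of $V^*=R+\gamma PV^*$. Let $D_\mu=\mathrm{diag}(\mu)$ and $A:=D_\mu(I-\gamma P)$. For $x\in\mathbb{R}^n$, $\Vert x\Vert_\mu^2=x^TD_\mu x$; $\Vert\theta\Vert$ is the Euclidean norm. $\nabla V(\theta)$ is the Jacobian of $V$ with respect to $\theta=(\theta_1,\theta_2)\in\mathbb{R}^{d_1+d_2}$. A differentiable $f:\mathbb{R}^k\to\mathbb{R}^m$ is $h$-homogeneous (for $h\in\mathbb{R}$) if $f(x)=h\,\nabla f(x)\,x$ for all $x$. The projection $\Pi_\Phi$ is taken orthogonal with respect to the inner product $\langle x,y\rangle_\mu=x^TD_\mu y$. *)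

theory Defs
  imports "HOL-Analysis.Analysis"
begin

text \<open>States are the finite type 'n; P $ s $ s' = P(s'|s).\<close>

fun mpow :: "real^'n^'n \<Rightarrow> nat \<Rightarrow> real^'n^'n" where
  "mpow P 0 = mat 1"
| "mpow P (Suc k) = mpow P k ** P"

definition stochastic :: "real^'n^'n \<Rightarrow> bool" where
  "stochastic P \<longleftrightarrow> (\<forall>s s'. P $ s $ s' \<ge> 0) \<and> (\<forall>s. (\<Sum>s'\<in>UNIV. P $ s $ s') = 1)"

definition irreducible_chain :: "real^'n^'n \<Rightarrow> bool" where
  "irreducible_chain P \<longleftrightarrow> (\<forall>s s'. \<exists>k>0. mpow P k $ s $ s' > 0)"

definition aperiodic_chain :: "real^'n^'n \<Rightarrow> bool" where
  "aperiodic_chain P \<longleftrightarrow> (\<forall>s. Gcd {k::nat. k > 0 \<and> mpow P k $ s $ s > 0} = 1)"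

definition stationary_dist :: "real^'n^'n \<Rightarrow> real^'n \<Rightarrow> bool" where
  "stationary_dist P \<mu> \<longleftrightarrow> (\<forall>s. \<mu> $ s \<ge> 0) \<and> (\<Sum>s\<in>UNIV. \<mu> $ s) = 1 \<and> \<mu> v* P = \<mu>"

definition expected_reward :: "real^'n^'n \<Rightarrow> ('n \<Rightarrow> 'n \<Rightarrow> real) \<Rightarrow> real^'n" where
  "expected_reward P r = (\<chi> s. \<Sum>s'\<in>UNIV. P $ s $ s' * r s s')"

definition Dmu :: "real^'n \<Rightarrow> real^'n^'n" where
  "Dmu \<mu> = (\<chi> i j. if i = j then \<mu> $ i else 0)"

definition Amat :: "real^'n \<Rightarrow> real \<Rightarrow> real^'n^'n \<Rightarrow> real^'n^'n" where
  "Amat \<mu> \<gamma> P = Dmu \<mu> ** (mat 1 - \<gamma> *\<^sub>R P)"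

definition mu_inner :: "real^'n \<Rightarrow> real^'n \<Rightarrow> real^'n \<Rightarrow> real" where
  "mu_inner \<mu> x y = x \<bullet> (Dmu \<mu> *v y)"

definition mu_norm :: "real^'n \<Rightarrow> real^'n \<Rightarrow> real" where
  "mu_norm \<mu> x = sqrt (mu_inner \<mu> x x)"

definition proj_mu :: "real^'n \<Rightarrow> real^'d^'n \<Rightarrow> real^'n \<Rightarrow> real^'n" where
  "proj_mu \<mu> \<Phi> v = (THE u. u \<in> range (\<lambda>x. \<Phi> *v x) \<and>
      (\<forall>w \<in> range (\<lambda>x. \<Phi> *v x). mu_inner \<mu> (v - u) w = 0))"

end

theory Submission
  imports Defs
begin
lemma Dmu_mult: "Dmu \<mu> *v y = (\<chi> i. \<mu> $ i * y $ i)"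
  unfolding Dmu_def matrix_vector_mult_def vec_eq_iff
  by (auto simp: if_distrib[of "\<lambda>a. a * _"] cong: if_cong)

lemma mu_inner_sum: "mu_inner \<mu> x y = (\<Sum>i\<in>UNIV. \<mu> $ i * x $ i * y $ i)"
  by (simp add: mu_inner_def Dmu_mult inner_vec_def mult_ac)

lemma PxP: assumes P: "stochastic P" and mu: "stationary_dist P \<mu>"
  shows "mu_inner \<mu> x (P *v x) \<le> mu_inner \<mu> x x"
proof -
  have nn: "\<And>i. \<mu> $ i \<ge> 0" and st: "\<mu> v* P = \<mu>" using mu by (auto simp: stationary_dist_def)
  have Pn: "\<And>i j. P $ i $ j \<ge> 0" and rs: "\<And>i. (\<Sum>j\<in>UNIV. P $ i $ j) = 1" using P by (auto simp: stochastic_def)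
  have cs: "\<And>j. (\<Sum>i\<in>UNIV. \<mu> $ i * P $ i $ j) = \<mu> $ j"
  proof -
    fix j have "(\<mu> v* P) $ j = \<mu> $ j" using st by simp
    then show "(\<Sum>i\<in>UNIV. \<mu> $ i * P $ i $ j) = \<mu> $ j" by (simp add: vector_matrix_mult_def mult.commute)
  qed
  have "mu_inner \<mu> x (P *v x) = (\<Sum>i\<in>UNIV. \<Sum>j\<in>UNIV. \<mu> $ i * P $ i $ j * (x $ i * x $ j))"
    by (simp add: mu_inner_sum matrix_vector_mult_def sum_distrib_left mult_ac)
  also have "\<dots> \<le> (\<Sum>i\<in>UNIV. \<Sum>j\<in>UNIV. \<mu> $ i * P $ i $ j * ((x $ i)^2 + (x $ j)^2) / 2)"
  proof (intro sum_mono)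
    fix i j
    have "x $ i * x $ j \<le> ((x $ i)^2 + (x $ j)^2) / 2" using sum_squares_bound[of "x $ i" "x $ j"] by (simp add: power2_eq_square)
    then show "\<mu> $ i * P $ i $ j * (x $ i * x $ j) \<le> \<mu> $ i * P $ i $ j * ((x $ i)^2 + (x $ j)^2) / 2"
    proof -
      have "\<mu> $ i * P $ i $ j * (x $ i * x $ j) \<le> \<mu> $ i * P $ i $ j * (((x $ i)^2 + (x $ j)^2) / 2)"
        by (rule mult_left_mono[OF \<open>x $ i * x $ j \<le> _\<close> mult_nonneg_nonneg[OF nn Pn]])
      then show ?thesis by simp
    qed
  qed
  also have "\<dots> = (\<Sum>i\<in>UNIV. \<Sum>j\<in>UNIV. \<mu> $ i * (x $ i)^2 * P $ i $ j) / 2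
                 + (\<Sum>i\<in>UNIV. \<Sum>j\<in>UNIV. (x $ j)^2 * (\<mu> $ i * P $ i $ j)) / 2"
  proof -
    have "\<And>i j. \<mu> $ i * P $ i $ j * ((x $ i)^2 + (x $ j)^2) / 2 = \<mu> $ i * (x $ i)^2 * P $ i $ j / 2 + (x $ j)^2 * (\<mu> $ i * P $ i $ j) / 2"
      by (simp add: field_simps)
    then show ?thesis by (simp only: sum.distrib sum_divide_distrib)
  qed
  also have "\<dots> = mu_inner \<mu> x x / 2 + mu_inner \<mu> x x / 2"
  proof -
    have sw: "(\<Sum>i\<in>UNIV. \<Sum>j\<in>UNIV. (x $ j)^2 * (\<mu> $ i * P $ i $ j)) = (\<Sum>j\<in>UNIV. \<Sum>i\<in>UNIV. (x $ j)^2 * (\<mu> $ i * P $ i $ j))"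
      by (rule sum.swap)
    have e1: "(\<Sum>i\<in>UNIV. \<Sum>j\<in>UNIV. \<mu> $ i * (x $ i)^2 * P $ i $ j) = mu_inner \<mu> x x"
      unfolding mu_inner_sum sum_distrib_left[symmetric] rs by (simp add: power2_eq_square mult.assoc)
    have e2: "(\<Sum>j\<in>UNIV. \<Sum>i\<in>UNIV. (x $ j)^2 * (\<mu> $ i * P $ i $ j)) = mu_inner \<mu> x x"
      unfolding mu_inner_sum sum_distrib_left[symmetric] cs by (simp add: power2_eq_square mult_ac)
    show ?thesis using sw e1 e2 by simp
  qed
  finally show ?thesis by simp
qed

definition sc :: "real^'n \<Rightarrow> real^'n \<Rightarrow> real^'n" where
  "sc \<mu> x = (\<chi> i. sqrt (\<mu> $ i) * x $ i)"

lemma sc_linear: "linear (sc \<mu>)"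
  by (rule linearI) (simp_all add: sc_def vec_eq_iff algebra_simps)

lemma mu_inner_sc: assumes "\<forall>i. \<mu> $ i \<ge> 0"
  shows "mu_inner \<mu> x y = sc \<mu> x \<bullet> sc \<mu> y"
  unfolding mu_inner_sum sc_def inner_vec_def
  by (rule sum.cong) (use assms in \<open>auto simp: algebra_simps\<close>)

lemma mu_norm_sc: assumes "\<forall>i. \<mu> $ i \<ge> 0"
  shows "mu_norm \<mu> x = norm (sc \<mu> x)"
  by (simp add: mu_norm_def mu_inner_sc[OF assms] norm_eq_sqrt_inner)

lemma mu_CS: assumes "\<forall>i. \<mu> $ i \<ge> 0"
  shows "mu_inner \<mu> x y \<le> mu_norm \<mu> x * mu_norm \<mu> y"
  by (simp add: mu_inner_sc[OF assms] mu_norm_sc[OF assms] norm_cauchy_schwarz)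

lemma mpow_nonneg: assumes "stochastic P" shows "mpow P k $ i $ j \<ge> 0"
proof (induction k arbitrary: j)
  case 0 then show ?case by (simp add: mat_def)
next
  case (Suc k) then show ?case using assms
    by (auto simp: matrix_matrix_mult_def stochastic_def intro!: sum_nonneg)
qed

lemma mu_mpow: assumes "stationary_dist P \<mu>" shows "\<mu> v* mpow P k = \<mu>"
proof (induction k)
  case 0 then show ?case by (simp add: vector_matrix_mul_rid)
next
  case (Suc k) then show ?case using assms
    by (simp add: vector_matrix_mul_assoc[symmetric] stationary_dist_def)
qed

lemma mu_pos: assumes "stochastic P" "irreducible_chain P" "stationary_dist P \<mu>"
  shows "\<mu> $ s > 0"
proof -
  have nn: "\<forall>i. \<mu> $ i \<ge> 0" and s1: "(\<Sum>i\<in>UNIV. \<mu> $ i) = 1" using assms(3) by (auto simp: stationary_dist_def)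
  have "\<exists>s0. \<mu> $ s0 > 0"
  proof (rule ccontr)
    assume "\<not> ?thesis"
    then have "\<forall>i. \<mu> $ i = 0" using nn by (meson linorder_not_le order_antisym_conv)
    then show False using s1 by simp
  qed
  then obtain s0 where s0: "\<mu> $ s0 > 0" by blast
  obtain k where k: "mpow P k $ s0 $ s > 0" using assms(2) by (auto simp: irreducible_chain_def)
  have "mpow P k $ s0 $ s * \<mu> $ s0 \<le> (\<Sum>i\<in>UNIV. mpow P k $ i $ s * \<mu> $ i)"
    by (rule member_le_sum) (auto intro!: mult_nonneg_nonneg mpow_nonneg assms(1) nn[rule_format])
  also have "\<dots> = (\<mu> v* mpow P k) $ s"
    by (simp add: vector_matrix_mult_def mult.commute)
  also have "\<dots> = \<mu> $ s" using mu_mpow[OF assms(3)] by simp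
  finally have "mpow P k $ s0 $ s * \<mu> $ s0 \<le> \<mu> $ s" .
  then show ?thesis using mult_pos_pos[OF k s0] by linarith
qed

lemma M_mult: fixes P :: "real^'n^'n" shows "(mat 1 - \<gamma> *\<^sub>R P) *v x = x - \<gamma> *\<^sub>R (P *v x)"
  by (simp add: matrix_vector_mult_diff_rdistrib matrix_vector_mul_lid scaleR_matrix_vector_assoc)

lemma mu_inner_diff2: "mu_inner \<mu> x (y - c *\<^sub>R z) = mu_inner \<mu> x y - c * mu_inner \<mu> x z"
  by (simp add: mu_inner_sum sum_subtractf sum_distrib_left algebra_simps)

lemma quad: assumes P: "stochastic P" and mu: "stationary_dist P \<mu>" and g: "0 \<le> \<gamma>"
  shows "mu_inner \<mu> x ((mat 1 - \<gamma> *\<^sub>R P) *v x) \<ge> (1 - \<gamma>) * mu_inner \<mu> x x"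
proof -
  have "\<gamma> * mu_inner \<mu> x (P *v x) \<le> \<gamma> * mu_inner \<mu> x x"
    by (rule mult_left_mono[OF PxP[OF P mu] g])
  then show ?thesis unfolding M_mult mu_inner_diff2 by (simp add: algebra_simps)
qed

lemma proj_range:
  fixes \<Phi> :: "real^'d^'n"
  assumes pos: "\<forall>i. \<mu> $ i > 0"
  shows "proj_mu \<mu> \<Phi> v \<in> range (\<lambda>x. \<Phi> *v x)"
proof -
  have nn: "\<forall>i. \<mu> $ i \<ge> 0" using pos by (simp add: less_imp_le)
  let ?R = "range (\<lambda>x. \<Phi> *v x)"
  let ?S = "range (\<lambda>x. sc \<mu> (\<Phi> *v x))"
  have lin: "linear (\<lambda>x. sc \<mu> (\<Phi> *v x))"
    using linear_compose[OF matrix_vector_mul_linear sc_linear] by (simp add: o_def)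
  have sub: "subspace ?S" using linear_subspace_image[OF lin subspace_UNIV] by simp
  obtain y z where y: "y \<in> span ?S" and z: "\<And>w. w \<in> span ?S \<Longrightarrow> orthogonal z w" and yz: "sc \<mu> v = y + z"
    using orthogonal_subspace_decomp_exists[of ?S "sc \<mu> v"] by blast
  have spS: "span ?S = ?S" using sub by (metis span_eq_iff)
  have "y \<in> ?S" using y spS by simp
  then obtain x0 where x0: "y = sc \<mu> (\<Phi> *v x0)" by blast
  have ex: "\<Phi> *v x0 \<in> ?R \<and> (\<forall>w\<in>?R. mu_inner \<mu> (v - \<Phi> *v x0) w = 0)"
  proof (intro conjI ballI)
    show "\<Phi> *v x0 \<in> ?R" by simp
    fix w assume "w \<in> ?R"
    then obtain x where w: "w = \<Phi> *v x" by auto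
    have "sc \<mu> (v - \<Phi> *v x0) = z" using yz x0 linear_diff[OF sc_linear] by (metis add_diff_cancel_left')
    moreover have "orthogonal z (sc \<mu> w)" using z w spS by simp
    ultimately show "mu_inner \<mu> (v - \<Phi> *v x0) w = 0" by (simp add: mu_inner_sc[OF nn] orthogonal_def)
  qed
  have un: "u1 = u2" if "u1 \<in> ?R \<and> (\<forall>w\<in>?R. mu_inner \<mu> (v - u1) w = 0)"
      "u2 \<in> ?R \<and> (\<forall>w\<in>?R. mu_inner \<mu> (v - u2) w = 0)" for u1 u2
  proof -
    from that obtain a1 a2 where a: "u1 = \<Phi> *v a1" "u2 = \<Phi> *v a2" by auto
    have d: "u1 - u2 \<in> ?R" using a by (auto simp: matrix_vector_mult_diff_distrib intro!: image_eqI[of _ _ "a1 - a2"])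
    have "mu_inner \<mu> (v - u2) (u1 - u2) - mu_inner \<mu> (v - u1) (u1 - u2) = 0"
      using that(1)[THEN conjunct2, rule_format, OF d] that(2)[THEN conjunct2, rule_format, OF d] by simp
    then have "mu_inner \<mu> (u1 - u2) (u1 - u2) = 0"
      by (simp add: mu_inner_sum sum_subtractf[symmetric] algebra_simps)
    then have "sc \<mu> (u1 - u2) = 0" by (simp add: mu_inner_sc[OF nn])
    then have "\<And>i. sqrt (\<mu> $ i) * (u1 $ i - u2 $ i) = 0" by (simp add: sc_def vec_eq_iff)
    then have "\<And>i. u1 $ i - u2 $ i = 0" using pos by (metis mult_eq_0_iff real_sqrt_eq_zero_cancel_iff less_irrefl)
    then show ?thesis by (simp add: vec_eq_iff)
  qed
  have "\<exists>!u. u \<in> ?R \<and> (\<forall>w\<in>?R. mu_inner \<mu> (v - u) w = 0)"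
    using ex un by blast
  from theI'[OF this] show ?thesis unfolding proj_mu_def by blast
qed
lemma g_zero:
  fixes g :: "real^'d \<Rightarrow> real^'n" and Jg :: "real^'d \<Rightarrow> real^'d^'n"
  assumes g_deriv: "\<And>x. (g has_derivative (\<lambda>v. Jg x *v v)) (at x)"
    and g_hom: "\<And>x. g x = h *\<^sub>R (Jg x *v x)"
    and h: "h \<le> 0"
  shows "g x = 0"
proof (cases "h = 0")
  case True then show ?thesis using g_hom by simp
next
  case False
  then have hn: "h < 0" using h by simp
  define a where "a = - 1 / h"
  have a: "a > 0" using hn by (simp add: a_def)
  define \<psi> where "\<psi> c = c powr a *\<^sub>R g (c *\<^sub>R x)" for c :: real
  have dg: "((\<lambda>c. g (c *\<^sub>R x)) has_vector_derivative (Jg (c *\<^sub>R x) *v x)) (at c)" for c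
  proof -
    have "((\<lambda>c::real. c *\<^sub>R x) has_derivative (\<lambda>d. d *\<^sub>R x)) (at c)"
      by (intro derivative_eq_intros) auto
    from has_derivative_compose[OF this g_deriv]
    show ?thesis unfolding has_vector_derivative_def
      by (simp add: matrix_scaleR_vector_ac scaleR_matrix_vector_assoc)
  qed
  have d0: "(\<psi> has_vector_derivative 0) (at c within {0<..})" if c: "c \<in> {0<..}" for c
  proof -
    have c0: "c > 0" using c by simp
    have "(\<psi> has_vector_derivative (c powr a *\<^sub>R (Jg (c *\<^sub>R x) *v x) + (a * c powr (a - 1)) *\<^sub>R g (c *\<^sub>R x))) (at c)"
      unfolding \<psi>_def by (rule has_vector_derivative_scaleR[OF has_real_derivative_powr[OF c0] dg])
    moreover have "c powr a *\<^sub>R (Jg (c *\<^sub>R x) *v x) + (a * c powr (a - 1)) *\<^sub>R g (c *\<^sub>R x) = 0"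
    proof -
      have "g (c *\<^sub>R x) = (h * c) *\<^sub>R (Jg (c *\<^sub>R x) *v x)"
        using g_hom[of "c *\<^sub>R x"] by (simp add: matrix_scaleR_vector_ac scaleR_matrix_vector_assoc)
      moreover have "a * c powr (a - 1) * (h * c) = - (c powr a)"
      proof -
        have e1: "c powr (a - 1) * c = c powr a" using c0 by (simp add: powr_diff)
        have e2: "a * h = -1" using hn by (simp add: a_def)
        have "a * c powr (a - 1) * (h * c) = (a * h) * (c powr (a - 1) * c)" by (simp add: mult_ac)
        then show ?thesis using e1 e2 by simp
      qed
      ultimately show ?thesis by (simp add: scaleR_add_left[symmetric])
    qed
    ultimately show ?thesis by (simp add: has_vector_derivative_at_within)
  qed
  obtain K where K: "\<And>c. c \<in> {0<..} \<Longrightarrow> \<psi> c = K"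
    by (rule has_vector_derivative_zero_constant[of "{0<..}" \<psi>]) (use d0 in auto)
  have K1: "K = g x" using K[of 1] by (simp add: \<psi>_def)
  have lim: "(\<psi> \<longlongrightarrow> 0 *\<^sub>R g (0 *\<^sub>R x)) (at_right 0)"
    unfolding \<psi>_def
  proof (intro tendsto_scaleR)
    show "((\<lambda>c::real. c powr a) \<longlongrightarrow> 0) (at_right 0)"
      by (rule tendsto_zero_powrI[OF _ tendsto_const _ a]) (auto intro!: tendsto_ident_at eventually_at_rightI[of 0 1])
    have ic: "isCont g (0 *\<^sub>R x)" using has_derivative_continuous[OF g_deriv] by simp
    then show "((\<lambda>c. g (c *\<^sub>R x)) \<longlongrightarrow> g (0 *\<^sub>R x)) (at_right 0)"
    proof -
      have t: "((\<lambda>c::real. c *\<^sub>R x) \<longlongrightarrow> 0 *\<^sub>R x) (at_right 0)" by (intro tendsto_intros)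
      show ?thesis using isCont_tendsto_compose[OF ic t] .
    qed
  qed
  have lim2: "(\<psi> \<longlongrightarrow> K) (at_right 0)"
    by (rule tendsto_eventually) (auto intro!: eventually_at_rightI[of 0 1] K)
  have "K = 0" using tendsto_unique[OF trivial_limit_at_right_real lim2 lim] by simp
  then show ?thesis using K1 by simp
qed

lemma dot_transpose: "x \<bullet> (transpose A *v w) = (A *v x) \<bullet> (w::real^'n)"
proof -
  have "x \<bullet> (transpose A *v w) = (x v* transpose A) \<bullet> w" by (rule dot_lmul_matrix[symmetric])
  then show ?thesis by (simp only: vector_transpose_matrix)
qed

lemma mu_inner_diff: "mu_inner \<mu> x (y - z) = mu_inner \<mu> x y - mu_inner \<mu> x z"
  by (simp add: mu_inner_sum sum_subtractf algebra_simps)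

theorem theorem2:
  fixes P :: "real^'n^'n" and \<mu> :: "real^'n" and r :: "'n \<Rightarrow> 'n \<Rightarrow> real"
    and \<gamma> :: real and Vs :: "real^'n"
    and \<Phi> :: "real^'d1^'n" and g :: "real^'d2 \<Rightarrow> real^'n"
    and Jg :: "real^'d2 \<Rightarrow> real^'d2^'n" and h :: real
    and C ell :: real
    and \<theta> :: "real \<Rightarrow> (real^'d1) \<times> (real^'d2)" and \<theta>0 :: "(real^'d1) \<times> (real^'d2)"
  assumes P: "stochastic P" "irreducible_chain P" "aperiodic_chain P"
    and mu: "stationary_dist P \<mu>"
    and gamma: "0 \<le> \<gamma>" "\<gamma> < 1"
    and Vs: "Vs = expected_reward P r + \<gamma> *\<^sub>R (P *v Vs)"
    and Phi_rank: "rank \<Phi> = min CARD('n) CARD('d1)"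
    and g_deriv: "\<And>x. (g has_derivative (\<lambda>v. Jg x *v v)) (at x)"
    and Jg_cont: "continuous_on UNIV Jg"
    and g_hom: "\<And>x. g x = h *\<^sub>R (Jg x *v x)"
    and C: "C > 0" and ell: "ell > 0"
    and growth: "\<And>\<theta>1 \<theta>2. mu_norm \<mu> (\<Phi> *v \<theta>1 + g \<theta>2) \<le> C * norm (\<theta>1, \<theta>2) powr ell"
    and init: "\<theta> 0 = \<theta>0"
    and flow: "\<And>t. t \<ge> 0 \<Longrightarrow>
      (\<theta> has_vector_derivative
         (let V = \<Phi> *v fst (\<theta> t) + g (snd (\<theta> t));
              w = Amat \<mu> \<gamma> P *v (V - Vs)
          in - (transpose \<Phi> *v w, transpose (Jg (snd (\<theta> t))) *v w)))
       (at t within {0..})"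
  shows "Liminf at_top (\<lambda>t. ereal (mu_norm \<mu> (\<Phi> *v fst (\<theta> t) + g (snd (\<theta> t)) - proj_mu \<mu> \<Phi> Vs)))
           \<le> ereal (mu_norm \<mu> ((mat 1 - \<gamma> *\<^sub>R P) *v (Vs - proj_mu \<mu> \<Phi> Vs)) / (1 - \<gamma>))"
proof -
  have pos: "\<forall>i. \<mu> $ i > 0" using mu_pos[OF P(1,2) mu] by blast
  have nn: "\<forall>i. \<mu> $ i \<ge> 0" using pos by (simp add: less_imp_le)
  define p where "p = proj_mu \<mu> \<Phi> Vs"
  obtain x1 where x1: "p = \<Phi> *v x1" using proj_range[OF pos, of \<Phi> Vs] unfolding p_def by blast
  define M where "M = mat 1 - \<gamma> *\<^sub>R P"
  define e where "e = Vs - p"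
  define B where "B = mu_norm \<mu> (M *v e) / (1 - \<gamma>)"
  define k where "k = max h 0"
  have k0: "k \<ge> 0" by (simp add: k_def)
  have hk: "g x = k *\<^sub>R (Jg x *v x)" for x
  proof (cases "h > 0")
    case True then show ?thesis using g_hom by (simp add: k_def)
  next
    case False then show ?thesis using g_zero[of g Jg h x, OF g_deriv g_hom] by (simp add: k_def)
  qed
  define u where "u t = \<Phi> *v fst (\<theta> t) + g (snd (\<theta> t)) - p" for t
  define L where "L t = (fst (\<theta> t) - x1) \<bullet> (fst (\<theta> t) - x1) + k * (snd (\<theta> t) \<bullet> snd (\<theta> t))" for t
  define D where "D t = - 2 * mu_inner \<mu> (u t) (M *v (u t - e))" for t
  have L0: "L t \<ge> 0" for t unfolding L_def using k0 by (simp add: )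
  have deriv: "(L has_real_derivative D t) (at t)" if t: "t > 0" for t
  proof -
    define w where "w = Amat \<mu> \<gamma> P *v (\<Phi> *v fst (\<theta> t) + g (snd (\<theta> t)) - Vs)"
    define d1 where "d1 = - (transpose \<Phi> *v w)"
    define d2 where "d2 = - (transpose (Jg (snd (\<theta> t))) *v w)"
    have fl: "(\<theta> has_vector_derivative - (transpose \<Phi> *v w, transpose (Jg (snd (\<theta> t))) *v w)) (at t within {0..})"
      using flow[OF less_imp_le[OF t]] unfolding Let_def w_def .
    have at_eq: "at t within {0..} = at t" using t by (intro at_within_interior) simp
    have th: "(\<theta> has_derivative (\<lambda>s. s *\<^sub>R - (transpose \<Phi> *v w, transpose (Jg (snd (\<theta> t))) *v w))) (at t)"
      using fl unfolding at_eq has_vector_derivative_def .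
    have f1: "((\<lambda>t. fst (\<theta> t) - x1) has_derivative (\<lambda>s. s *\<^sub>R d1)) (at t)"
      using has_derivative_diff[OF has_derivative_fst[OF th] has_derivative_const[of x1]] by (simp add: d1_def)
    have f2: "((\<lambda>t. snd (\<theta> t)) has_derivative (\<lambda>s. s *\<^sub>R d2)) (at t)"
      using has_derivative_snd[OF th] by (simp add: d2_def)
    have "(L has_derivative (\<lambda>s. (fst (\<theta> t) - x1) \<bullet> (s *\<^sub>R d1) + (s *\<^sub>R d1) \<bullet> (fst (\<theta> t) - x1)
            + k * (snd (\<theta> t) \<bullet> (s *\<^sub>R d2) + (s *\<^sub>R d2) \<bullet> snd (\<theta> t)))) (at t)"
      unfolding L_def
      by (intro has_derivative_add has_derivative_mult_right has_derivative_inner f1 f2)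
    moreover have "(\<lambda>s. (fst (\<theta> t) - x1) \<bullet> (s *\<^sub>R d1) + (s *\<^sub>R d1) \<bullet> (fst (\<theta> t) - x1)
            + k * (snd (\<theta> t) \<bullet> (s *\<^sub>R d2) + (s *\<^sub>R d2) \<bullet> snd (\<theta> t))) = (*) (D t)"
    proof
      fix s
      have a1: "(fst (\<theta> t) - x1) \<bullet> d1 = - ((\<Phi> *v fst (\<theta> t) - p) \<bullet> w)"
        unfolding d1_def inner_minus_right dot_transpose by (simp add: x1 matrix_vector_mult_diff_distrib)
      have a2: "k * (snd (\<theta> t) \<bullet> d2) = - (g (snd (\<theta> t)) \<bullet> w)"
        unfolding d2_def inner_minus_right dot_transpose hk[of "snd (\<theta> t)"] by simp
      have a3: "(\<Phi> *v fst (\<theta> t) - p) \<bullet> w + g (snd (\<theta> t)) \<bullet> w = u t \<bullet> w"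
        by (simp add: u_def inner_add_left inner_diff_left)
      have a4: "u t \<bullet> w = mu_inner \<mu> (u t) (M *v (u t - e))"
        by (simp add: w_def Amat_def mu_inner_def matrix_vector_mul_assoc[symmetric] M_def u_def e_def add_diff_eq)
      have "(fst (\<theta> t) - x1) \<bullet> (s *\<^sub>R d1) + (s *\<^sub>R d1) \<bullet> (fst (\<theta> t) - x1)
            + k * (snd (\<theta> t) \<bullet> (s *\<^sub>R d2) + (s *\<^sub>R d2) \<bullet> snd (\<theta> t))
           = 2 * s * ((fst (\<theta> t) - x1) \<bullet> d1 + k * (snd (\<theta> t) \<bullet> d2))"
        by (simp add: inner_commute[of d1] inner_commute[of d2] algebra_simps)
      also have "\<dots> = D t * s"
      proof -
        have X: "(fst (\<theta> t) - x1) \<bullet> d1 + k * (snd (\<theta> t) \<bullet> d2) = - mu_inner \<mu> (u t) (M *v (u t - e))"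
          using a1 a2 a3 a4 by linarith
        show ?thesis unfolding X D_def by (simp add: mult_ac)
      qed
      finally show "(fst (\<theta> t) - x1) \<bullet> (s *\<^sub>R d1) + (s *\<^sub>R d1) \<bullet> (fst (\<theta> t) - x1)
            + k * (snd (\<theta> t) \<bullet> (s *\<^sub>R d2) + (s *\<^sub>R d2) \<bullet> snd (\<theta> t)) = D t * s" .
    qed
    ultimately show ?thesis by (simp add: has_field_derivative_def)
  qed
  have B0: "B \<ge> 0" using gamma by (simp add: B_def mu_norm_sc[OF nn])
  have Dbound: "D t \<le> - 2 * (1 - \<gamma>) * (mu_norm \<mu> (u t) * (mu_norm \<mu> (u t) - B))" for t
  proof -
    have q: "mu_inner \<mu> (u t) (M *v u t) \<ge> (1 - \<gamma>) * mu_inner \<mu> (u t) (u t)"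
      unfolding M_def by (rule quad[OF P(1) mu gamma(1)])
    have n2: "mu_inner \<mu> (u t) (u t) = (mu_norm \<mu> (u t))^2"
      by (simp add: mu_inner_sc[OF nn] mu_norm_sc[OF nn] power2_norm_eq_inner)
    have c: "mu_inner \<mu> (u t) (M *v e) \<le> mu_norm \<mu> (u t) * ((1 - \<gamma>) * B)"
      using mu_CS[OF nn, of "u t" "M *v e"] gamma by (simp add: B_def)
    have "D t = - 2 * (mu_inner \<mu> (u t) (M *v u t) - mu_inner \<mu> (u t) (M *v e))"
      by (simp add: D_def matrix_vector_mult_diff_distrib mu_inner_diff)
    also have "\<dots> \<le> - 2 * ((1 - \<gamma>) * (mu_norm \<mu> (u t))^2 - mu_norm \<mu> (u t) * ((1 - \<gamma>) * B))"
      using q c unfolding n2 by argo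
    also have "\<dots> = - 2 * (1 - \<gamma>) * (mu_norm \<mu> (u t) * (mu_norm \<mu> (u t) - B))"
      by (simp add: power2_eq_square algebra_simps)
    finally show ?thesis .
  qed
  have main: "Liminf at_top (\<lambda>t. ereal (mu_norm \<mu> (u t))) \<le> ereal B"
  proof (rule ccontr)
    assume "\<not> ?thesis"
    then have "ereal B < Liminf at_top (\<lambda>t. ereal (mu_norm \<mu> (u t)))" by simp
    from ereal_dense2[OF this] obtain y where y1: "B < y"
      and y2: "ereal y < Liminf at_top (\<lambda>t. ereal (mu_norm \<mu> (u t)))" by auto
    from less_LiminfD[OF y2] have "\<forall>\<^sub>F t in at_top. y < mu_norm \<mu> (u t)" by simp
    then obtain T where T: "\<And>t. t \<ge> T \<Longrightarrow> y < mu_norm \<mu> (u t)"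
      by (auto simp: eventually_at_top_linorder)
    define T1 where "T1 = max T 1"
    define \<delta> where "\<delta> = 2 * (1 - \<gamma>) * (y * (y - B))"
    have y0: "y > 0" using y1 B0 by linarith
    have \<delta>0: "\<delta> > 0" using gamma y0 y1 by (simp add: \<delta>_def)
    have Dle: "D t \<le> - \<delta>" if "t \<ge> T1" for t
    proof -
      have yt: "y < mu_norm \<mu> (u t)" using T[of t] that by (simp add: T1_def)
      have "y * (y - B) \<le> mu_norm \<mu> (u t) * (mu_norm \<mu> (u t) - B)"
        by (rule mult_mono) (use yt y1 y0 in auto)
      then have "2 * (1 - \<gamma>) * (y * (y - B)) \<le> 2 * (1 - \<gamma>) * (mu_norm \<mu> (u t) * (mu_norm \<mu> (u t) - B))"
        by (rule mult_left_mono) (use gamma in simp)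
      then show ?thesis using Dbound[of t] unfolding \<delta>_def by argo
    qed
    define b where "b = T1 + L T1 / \<delta> + 1"
    have L0T: "L T1 \<ge> 0" by (rule L0)
    have bT: "T1 \<le> b" using L0T \<delta>0 by (simp add: b_def)
    have "(\<lambda>t. L t + \<delta> * t) b \<le> (\<lambda>t. L t + \<delta> * t) T1"
    proof (rule DERIV_nonpos_imp_nonincreasing[OF bT])
      fix x assume x: "T1 \<le> x" "x \<le> b"
      have "x > 0" using x by (simp add: T1_def)
      then have "((\<lambda>t. L t + \<delta> * t) has_real_derivative D x + \<delta> * 1) (at x)"
        by (rule DERIV_add[OF deriv DERIV_cmult[OF DERIV_ident]])
      then show "\<exists>y. ((\<lambda>t. L t + \<delta> * t) has_real_derivative y) (at x) \<and> y \<le> 0"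
        using Dle[OF x(1)] by (intro exI[of _ "D x + \<delta> * 1"]) simp
    qed
    then have "L b \<le> L T1 - \<delta> * (b - T1)" by (simp add: algebra_simps)
    also have "\<delta> * (b - T1) = L T1 + \<delta>" using \<delta>0 by (simp add: b_def field_simps)
    finally have "L b \<le> - \<delta>" by simp
    then show False using L0[of b] \<delta>0 by linarith
  qed
  then show ?thesis by (simp add: u_def p_def B_def M_def e_def)
qed
end
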